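(* Consider a link of constant bit rate $c>0$ shared by several FIFO queues under non-preemptive strict priority scheduling, and consider the highest-priority queue, whose input flow consists of packets of positive length. Let $l^{M_l}$ denote the maximum packet length of all lower-priority queues. Then $\beta(t)=c\left(t-\frac{l^{M_l}}{c}\right)^{+}$ is neither a strict service curve nor a service curve for the highest-priority queue; that is, there exist traffic patterns for which the strict service curve inequality fails and traffic patterns and times $t\ge0$ with $A^{*}(t)<\inf_{0\le s\le t}\{A(s)+\beta(t-s)\}$, where $A,A^{*}$ are the cumulative input and output of the highest-priority queue.
   Context: $(x)^{+}=\max\{x,0\}$. Non-preemptive strict priority: whenever the link is free, it starts transmitting the head packet of the highest-priority nonempty queue; a packet in transmission is never interrupted. Packets have arrival times $a(n)$, departure times $d(n)$ and lengths $l(n)>0$ bits. By convention, a packet is said to have arrived (respectively, been served) when and only when its last bit has arrived (respectively, departed). $A(t)$ is the cumulative amount of traffic (sum of packet lengths) of the highest-priority flow that has arrived in $[0,t)$ and $A^{*}(t)$ the amount that has been served in $[0,t)$; $A(0)=A^{*}(0)=0$, $A(s,t)=A(t)-A(s)$, $A^{*}(s,t)=A^{*}(t)-A^{*}(s)$. Queues have infinite buffers and are initially empty. With $\mathcal{F}_0$ the set of nonnegative nondecreasing functions vanishing at $0$, $\beta\in\mathcal{F}_0$ is a service curve if $A^{*}(t)\ge\inf_{0\le s\le t}\{A(s)+\beta(t-s)\}$ for all $t\ge0$, and a strict service curve if for every backlogged period $(s,t]$ of the queue, $A^{*}(s,t)\ge\beta(t-s)$. *)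

theory Defs
  imports Complex_Main
begin

text \<open>
A finite packet trace on a link of constant rate c: packets are indexed by i < N.
Packet i belongs to queue q i (priority class; 0 = highest priority, larger = lower),
its last bit arrives at a i, it has length l i > 0 (bits), its transmission starts at
b i and it departs (last bit leaves) at  b i + l i / c.
\<close>

definition dep :: "real \<Rightarrow> (nat \<Rightarrow> real) \<Rightarrow> (nat \<Rightarrow> real) \<Rightarrow> nat \<Rightarrow> real" where
  "dep c l b i = b i + l i / c"

definition npsp_valid ::
  "real \<Rightarrow> nat \<Rightarrow> (nat \<Rightarrow> nat) \<Rightarrow> (nat \<Rightarrow> real) \<Rightarrow> (nat \<Rightarrow> real) \<Rightarrow> (nat \<Rightarrow> real) \<Rightarrow> bool" where
  "npsp_valid c N q a l b \<longleftrightarrow>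
     0 < c \<and>
     (\<forall>i<N. 0 \<le> a i \<and> a i \<le> b i \<and> 0 < l i) \<and>
     \<comment> \<open>one packet at a time, never interrupted\<close>
     (\<forall>i<N. \<forall>j<N. i \<noteq> j \<longrightarrow> dep c l b i \<le> b j \<or> dep c l b j \<le> b i) \<and>
     \<comment> \<open>work conserving: the link is busy whenever some arrived packet waits\<close>
     (\<forall>t. (\<exists>i<N. a i \<le> t \<and> t < b i) \<longrightarrow> (\<exists>j<N. b j \<le> t \<and> t < dep c l b j)) \<and>
     \<comment> \<open>strict priority: a higher-priority packet present when a transmission starts goes first\<close>
     (\<forall>i<N. \<forall>j<N. q i < q j \<and> a i \<le> b j \<longrightarrow> b i < b j) \<and>
     \<comment> \<open>FIFO inside each queue\<close>
     (\<forall>i<N. \<forall>j<N. q i = q j \<and> a i < a j \<longrightarrow> b i < b j)"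

definition arr0 :: "nat \<Rightarrow> (nat \<Rightarrow> nat) \<Rightarrow> (nat \<Rightarrow> real) \<Rightarrow> (nat \<Rightarrow> real) \<Rightarrow> real \<Rightarrow> real" where
  "arr0 N q a l t = (\<Sum>i\<in>{i. i < N \<and> q i = 0 \<and> a i < t}. l i)"

definition dep0 :: "real \<Rightarrow> nat \<Rightarrow> (nat \<Rightarrow> nat) \<Rightarrow> (nat \<Rightarrow> real) \<Rightarrow> (nat \<Rightarrow> real) \<Rightarrow> real \<Rightarrow> real" where
  "dep0 c N q l b t = (\<Sum>i\<in>{i. i < N \<and> q i = 0 \<and> dep c l b i < t}. l i)"

text \<open>Maximum packet length over all lower-priority queues (assumed nonempty).\<close>
definition low_max_len :: "nat \<Rightarrow> (nat \<Rightarrow> nat) \<Rightarrow> (nat \<Rightarrow> real) \<Rightarrow> real" where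
  "low_max_len N q l = Max (l ` {i. i < N \<and> 0 < q i})"

definition beta_np :: "real \<Rightarrow> real \<Rightarrow> real \<Rightarrow> real" where
  "beta_np c lM t = c * max (t - lM / c) 0"

definition strict_service_curve :: "(real \<Rightarrow> real) \<Rightarrow> (real \<Rightarrow> real) \<Rightarrow> (real \<Rightarrow> real) \<Rightarrow> bool" where
  "strict_service_curve A As \<beta> \<longleftrightarrow>
     (\<forall>s t. 0 \<le> s \<and> s < t \<and> (\<forall>u. s < u \<and> u \<le> t \<longrightarrow> As u < A u)
        \<longrightarrow> \<beta> (t - s) \<le> As t - As s)"

definition service_curve :: "(real \<Rightarrow> real) \<Rightarrow> (real \<Rightarrow> real) \<Rightarrow> (real \<Rightarrow> real) \<Rightarrow> bool" where
  "service_curve A As \<beta> \<longleftrightarrow>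
     (\<forall>t\<ge>0. Inf ((\<lambda>s. A s + \<beta> (t - s)) ` {0..t}) \<le> As t)"

end

theory Submission
  imports Defs
begin

definition "qq = (\<lambda>i::nat. if i = 0 then 0 else (1::nat))"
definition "aa c lM = (\<lambda>i::nat. if i = 0 then lM / (2*c) else (0::real))"
definition "ll lM = (\<lambda>i::nat. (lM::real))"
definition "bb c lM = (\<lambda>i::nat. if i = 0 then lM / c else (0::real))"

lemma set2: "{i::nat. i < 2 \<and> P i} = (if P 0 then {0} else {}) \<union> (if P 1 then {1} else {})"
proof (rule set_eqI)
  fix x :: nat
  show "x \<in> {i. i < 2 \<and> P i} \<longleftrightarrow> x \<in> (if P 0 then {0} else {}) \<union> (if P 1 then {1} else {})"
  proof (cases "x = 0")
    case True then show ?thesis by simp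
  next
    case False
    then show ?thesis by (cases "x = 1") auto
  qed
qed

lemma arr_eq: "arr0 2 qq (aa c lM) (ll lM) s = (if lM/(2*c) < s then lM else 0)"
  unfolding arr0_def by (subst set2) (simp add: qq_def aa_def ll_def)

lemma dep_eq: "dep0 c 2 qq (ll lM) (bb c lM) s = (if lM/c + lM/c < s then lM else 0)"
  unfolding dep0_def by (subst set2) (simp add: qq_def bb_def ll_def dep_def)

lemma valid:
  assumes "0 < c" "0 < lM"
  shows "npsp_valid c 2 qq (aa c lM) (ll lM) (bb c lM)"
proof -
  have h: "lM/(2*c) < lM/c" using assms by (simp add: divide_strict_left_mono)
  have p: "0 < lM/(2*c)" "0 < lM/c" using assms by auto
  have W: "\<exists>j<2. bb c lM j \<le> t \<and> t < dep c (ll lM) (bb c lM) j"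
    if "\<exists>i<2. aa c lM i \<le> t \<and> t < bb c lM i" for t
  proof -
    from that have "lM/(2*c) \<le> t" "t < lM/c"
      by (auto simp: less_2_cases_iff aa_def bb_def)
    then have "bb c lM 1 \<le> t \<and> t < dep c (ll lM) (bb c lM) 1"
      using p by (simp add: bb_def dep_def ll_def)
    then show ?thesis by (intro exI[of _ 1]) simp
  qed
  have D: "dep c (ll lM) (bb c lM) 1 \<le> bb c lM 0" by (simp add: bb_def dep_def ll_def)
  show ?thesis
    unfolding npsp_valid_def
    apply (intro conjI)
    subgoal using assms by simp
    subgoal using assms p apply (auto simp: less_2_cases_iff aa_def ll_def bb_def)
      using h by linarith
    subgoal using D by (auto simp: less_2_cases_iff)
    subgoal using W by blast
    subgoal using p by (auto simp: less_2_cases_iff qq_def aa_def bb_def)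
    subgoal by (auto simp: less_2_cases_iff qq_def)
    done
qed

lemma lowmax: "low_max_len 2 qq (ll lM) = lM"
proof -
  have "{i. i < 2 \<and> 0 < qq i} = {1::nat}" by (auto simp: qq_def less_2_cases_iff)
  then show ?thesis unfolding low_max_len_def by (simp add: ll_def)
qed

theorem proposition3:
  fixes c lM :: real
  assumes "0 < c" and "0 < lM"
  shows "(\<exists>N q a l b. npsp_valid c N q a l b \<and> (\<exists>i<N. 0 < q i) \<and> low_max_len N q l = lM \<and>
            \<not> strict_service_curve (arr0 N q a l) (dep0 c N q l b) (beta_np c lM))
       \<and> (\<exists>N q a l b. npsp_valid c N q a l b \<and> (\<exists>i<N. 0 < q i) \<and> low_max_len N q l = lM \<and>
            (\<exists>t\<ge>0. dep0 c N q l b t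
                     < Inf ((\<lambda>s. arr0 N q a l s + beta_np c lM (t - s)) ` {0..t})))"
proof -
  have V: "npsp_valid c 2 qq (aa c lM) (ll lM) (bb c lM)" using valid assms by blast
  have Q: "\<exists>i<2. 0 < qq i" by (rule exI[of _ 1]) (simp add: qq_def)
  have h: "lM/(2*c) < lM/c" using assms by (simp add: divide_strict_left_mono)
  have p: "0 < lM/(2*c)" "0 < lM/c" using assms by auto
  have e1: "c * (lM/c) = lM" "c * (lM/(2*c)) = lM/2" using assms by auto
  have S: "\<not> strict_service_curve (arr0 2 qq (aa c lM) (ll lM)) (dep0 c 2 qq (ll lM) (bb c lM)) (beta_np c lM)"
    unfolding strict_service_curve_def arr_eq dep_eq
  proof
    assume H: "\<forall>s t. 0 \<le> s \<and> s < t \<and>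
      (\<forall>u. s < u \<and> u \<le> t \<longrightarrow> (if lM / c + lM / c < u then lM else 0) < (if lM / (2 * c) < u then lM else 0)) \<longrightarrow>
      beta_np c lM (t - s) \<le> (if lM / c + lM / c < t then lM else 0) - (if lM / c + lM / c < s then lM else 0)"
    have "beta_np c lM (lM/c + lM/c - lM/(2*c)) \<le> 0"
      using H[rule_format, of "lM/(2*c)" "lM/c + lM/c"] h p assms by auto
    moreover have "beta_np c lM (lM/c + lM/c - lM/(2*c)) = lM/2"
      unfolding beta_np_def using h p e1 by (simp add: right_diff_distrib)
    ultimately show False using assms by simp
  qed
  have I: "dep0 c 2 qq (ll lM) (bb c lM) (lM/c + lM/c)
      < Inf ((\<lambda>s. arr0 2 qq (aa c lM) (ll lM) s + beta_np c lM ((lM/c + lM/c) - s)) ` {0..lM/c + lM/c})"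
  proof -
    have "lM/2 \<le> Inf ((\<lambda>s. arr0 2 qq (aa c lM) (ll lM) s + beta_np c lM ((lM/c + lM/c) - s)) ` {0..lM/c + lM/c})"
    proof (rule cInf_greatest)
      show "(\<lambda>s. arr0 2 qq (aa c lM) (ll lM) s + beta_np c lM (lM / c + lM / c - s)) ` {0..lM / c + lM / c} \<noteq> {}"
        using p by auto
    next
      fix x assume "x \<in> (\<lambda>s. arr0 2 qq (aa c lM) (ll lM) s + beta_np c lM (lM / c + lM / c - s)) ` {0..lM / c + lM / c}"
      then obtain s where s: "0 \<le> s" "s \<le> lM/c + lM/c" and x: "x = arr0 2 qq (aa c lM) (ll lM) s + beta_np c lM (lM / c + lM / c - s)"
        by auto
      have b0: "0 \<le> beta_np c lM r" for r unfolding beta_np_def using assms by simp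
      show "lM/2 \<le> x"
      proof (cases "lM/(2*c) < s")
        case True then show ?thesis using x b0 assms by (simp add: arr_eq)
      next
        case False
        have "c * (lM/c + lM/c - s - lM/c) \<ge> c * (lM/c - lM/(2*c))"
          using False assms by (intro mult_left_mono) auto
        also have "c * (lM/c - lM/(2*c)) = lM/2" using e1 by (simp add: right_diff_distrib)
        finally have "lM/2 \<le> beta_np c lM (lM / c + lM / c - s)"
          unfolding beta_np_def using assms by (smt (verit) mult_left_mono)
        then show ?thesis using x False by (simp add: arr_eq)
      qed
    qed
    moreover have "dep0 c 2 qq (ll lM) (bb c lM) (lM/c + lM/c) = 0" by (simp add: dep_eq)
    ultimately show ?thesis using assms by simp
  qed
  show ?thesis
    apply (rule conjI)
     apply (rule exI[of _ 2], rule exI[of _ qq], rule exI[of _ "aa c lM"], rule exI[of _ "ll lM"], rule exI[of _ "bb c lM"])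
     apply (simp add: V Q lowmax S)
    apply (rule exI[of _ 2], rule exI[of _ qq], rule exI[of _ "aa c lM"], rule exI[of _ "ll lM"], rule exI[of _ "bb c lM"])
    apply (simp only: V Q lowmax simp_thms)
    apply (rule exI[of _ "lM/c + lM/c"])
    using I p by simp
qed

end
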